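(* For every fixed priority order on the agents, the algorithm MaxMatch is a pseudomonotone $2$-rank-approximation algorithm for matching markets, and it is fully lex-truthfully implementable. MaxMatch: start with the empty matching $M$. For $r=1,2,\dots,m$: for every item $i$ not matched in $M$ such that some agent not matched in $M$ has $i$ among its top $r$ items, match $i$ to the highest-priority agent that is not matched in $M$ and has $i$ among its top $r$ items (updating $M$). Output $M$ after stage $m$.
   Context: Matching market: $n$ agents and $m$ items; each agent $j$ reports any strict total order $\succ_j$ on the items. An outcome is a matching of agents to items (each agent gets at most one item, each item at most one agent); an agent not matched gets the null item $\emptyset$, ranked below all items. Agents compare outcomes only through the item they receive. For a matching $M$ and profile $\succ$, $\mathrm{rank}_i(M;\succ)$ is the number of agents assigned one of their top-$i$ items, and $\mathrm{maxrank}_i(\succ)$ is its maximum over all matchings. A (possibly randomized) algorithm is an $\alpha$-rank-approximation algorithm if for every $\succ$ and every $i\in[m]$, $\mathbb{E}[\mathrm{rank}_i(\text{output};\succ)]\ge\mathrm{maxrank}_i(\succ)/\alpha$. A deterministic algorithm $f$ is pseudomonotone if for every agent $j$, every $\succ_{-j}$ and all $\succ_j,\succ'_j$, letting $a$ and $a'$ be the items (possibly $\emptyset$) assigned to $j$ by $f(\succ_j,\succ_{-j})$ and $f(\succ'_j,\succ_{-j})$: either $a\succeq_j a'$ (i.e. $a=a'$ or $a\succ_j a'$), or there is an item $b$ with $b\succ_j a'$ and the position of $b$ in $\succ_j$ is strictly smaller than its position in $\succ'_j$. For a randomized mechanism, each agent $j$ gets a distribution over items $\cup\{\emptyset\}$;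 a distribution $p$ lex-dominates $q\ne p$ w.r.t. $\succ_j$ if at the first element (in the order $\succ_j$, with $\emptyset$ last) where they differ, $p$ is larger. A randomized mechanism is lex-truthful if for all $j,\succ_j,\succ'_j,\succ_{-j}$, $j$'s item distribution under $(\succ_j,\succ_{-j})$ either equals or lex-dominates w.r.t. $\succ_j$ its item distribution under $(\succ'_j,\succ_{-j})$. A deterministic algorithm $f$ is fully lex-truthfully implementable if for every $\varepsilon>0$ there is a lex-truthful randomized mechanism $\mathcal{M}^\varepsilon$ with $\Pr[\mathcal{M}^\varepsilon(\succ)=f(\succ)]\ge1-\varepsilon$ for all profiles $\succ$. *)

theory Defs
  imports "HOL-Probability.Probability"
begin

text \<open>Agents are 0..<n, items are 0..<m. A preference of an agent is a list enumerating
  all items, best first. A matching is a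
  partial map from agents to items (None = null item).\<close>

type_synonym pref = "nat list"
type_synonym profile = "nat \<Rightarrow> pref"
type_synonym matching = "nat \<Rightarrow> nat option"

definition valid_pref :: "nat \<Rightarrow> pref \<Rightarrow> bool" where
  "valid_pref m p \<longleftrightarrow> distinct p \<and> set p = {0..<m}"

definition valid_profile :: "nat \<Rightarrow> nat \<Rightarrow> profile \<Rightarrow> bool" where
  "valid_profile n m P \<longleftrightarrow> (\<forall>j<n. valid_pref m (P j))"

definition is_matching :: "nat \<Rightarrow> nat \<Rightarrow> matching \<Rightarrow> bool" where
  "is_matching n m M \<longleftrightarrow> (\<forall>j. M j \<noteq> None \<longrightarrow> j < n) \<and> (\<forall>j a. M j = Some a \<longrightarrow> a < m)
     \<and> inj_on M (dom M)"

definition pos :: "pref \<Rightarrow> nat \<Rightarrow> nat" where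
  "pos p b = (LEAST k. k < length p \<and> p ! k = b)"

fun better :: "pref \<Rightarrow> nat option \<Rightarrow> nat option \<Rightarrow> bool" where
  "better p (Some a) None = True"
| "better p (Some a) (Some b) = (pos p a < pos p b)"
| "better p None _ = False"

definition weakly_better :: "pref \<Rightarrow> nat option \<Rightarrow> nat option \<Rightarrow> bool" where
  "weakly_better p x y \<longleftrightarrow> x = y \<or> better p x y"

definition rank :: "nat \<Rightarrow> nat \<Rightarrow> matching \<Rightarrow> profile \<Rightarrow> nat" where
  "rank n i M P = card {j. j < n \<and> (\<exists>a. M j = Some a \<and> a \<in> set (take i (P j)))}"

definition maxrank :: "nat \<Rightarrow> nat \<Rightarrow> nat \<Rightarrow> profile \<Rightarrow> nat" where
  "maxrank n m i P = Max {rank n i M P | M. is_matching n m M}"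

definition is_mechanism :: "nat \<Rightarrow> nat \<Rightarrow> (profile \<Rightarrow> matching pmf) \<Rightarrow> bool" where
  "is_mechanism n m Mech \<longleftrightarrow>
     (\<forall>P. valid_profile n m P \<longrightarrow> set_pmf (Mech P) \<subseteq> {M. is_matching n m M})"

definition rank_approx :: "nat \<Rightarrow> nat \<Rightarrow> real \<Rightarrow> (profile \<Rightarrow> matching pmf) \<Rightarrow> bool" where
  "rank_approx n m \<alpha> Mech \<longleftrightarrow>
     is_mechanism n m Mech \<and>
     (\<forall>P. valid_profile n m P \<longrightarrow> (\<forall>i\<in>{1..m}.
        measure_pmf.expectation (Mech P) (\<lambda>M. real (rank n i M P)) \<ge> real (maxrank n m i P) / \<alpha>))"

definition pseudomonotone :: "nat \<Rightarrow> nat \<Rightarrow> (profile \<Rightarrow> matching) \<Rightarrow> bool" where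
  "pseudomonotone n m f \<longleftrightarrow>
    (\<forall>P j p'. valid_profile n m P \<longrightarrow> j < n \<longrightarrow> valid_pref m p' \<longrightarrow>
       (let a = f P j; a' = f (P(j := p')) j in
          weakly_better (P j) a a' \<or>
          (\<exists>b<m. better (P j) (Some b) a' \<and> pos (P j) b < pos p' b)))"

definition item_dist :: "matching pmf \<Rightarrow> nat \<Rightarrow> nat option \<Rightarrow> real" where
  "item_dist D j x = measure_pmf.prob D {M. M j = x}"

definition lex_dominates :: "pref \<Rightarrow> (nat option \<Rightarrow> real) \<Rightarrow> (nat option \<Rightarrow> real) \<Rightarrow> bool" where
  "lex_dominates p d d' \<longleftrightarrow>
     (let L = map Some p @ [None] in
      \<exists>k < length L. (\<forall>l<k. d (L ! l) = d' (L ! l)) \<and> d (L ! k) > d' (L ! k))"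

definition lex_truthful :: "nat \<Rightarrow> nat \<Rightarrow> (profile \<Rightarrow> matching pmf) \<Rightarrow> bool" where
  "lex_truthful n m Mech \<longleftrightarrow>
    (\<forall>P j p'. valid_profile n m P \<longrightarrow> j < n \<longrightarrow> valid_pref m p' \<longrightarrow>
       item_dist (Mech P) j = item_dist (Mech (P(j := p'))) j \<or>
       lex_dominates (P j) (item_dist (Mech P) j) (item_dist (Mech (P(j := p'))) j))"

definition fully_lex_truthfully_implementable ::
  "nat \<Rightarrow> nat \<Rightarrow> (profile \<Rightarrow> matching) \<Rightarrow> bool" where
  "fully_lex_truthfully_implementable n m f \<longleftrightarrow>
    (\<forall>\<epsilon>>0. \<exists>Mech. is_mechanism n m Mech \<and> lex_truthful n m Mech \<and>
       (\<forall>P. valid_profile n m P \<longrightarrow> measure_pmf.prob (Mech P) {f P} \<ge> 1 - \<epsilon>))"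

text \<open>MaxMatch with priority list pr (earlier = higher priority). Within stage r, the
  unmatched items are processed in increasing index order.\<close>
definition mm_item :: "nat list \<Rightarrow> profile \<Rightarrow> nat \<Rightarrow> matching \<Rightarrow> nat \<Rightarrow> matching" where
  "mm_item pr P r M i =
     (if i \<in> ran M then M else
      (case find (\<lambda>j. M j = None \<and> i \<in> set (take r (P j))) pr of
         None \<Rightarrow> M
       | Some j \<Rightarrow> M(j \<mapsto> i)))"

definition mm_stage :: "nat \<Rightarrow> nat list \<Rightarrow> profile \<Rightarrow> matching \<Rightarrow> nat \<Rightarrow> matching" where
  "mm_stage m pr P M r = foldl (mm_item pr P r) M [0..<m]"

definition MaxMatch :: "nat \<Rightarrow> nat list \<Rightarrow> profile \<Rightarrow> matching" where
  "MaxMatch m pr P = foldl (mm_stage m pr P) Map.empty [1..<m+1]"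

end

theory Submission
  imports Defs
begin

lemma find_SomeD: "find Q xs = Some x \<Longrightarrow> x \<in> set xs \<and> Q x"
  by (induction xs) (auto split: if_splits)

lemma mm_item_le: "M \<subseteq>\<^sub>m mm_item pr P r M i"
  unfolding mm_item_def
  by (auto simp: map_le_def split: option.splits dest!: find_SomeD)

lemma foldl_le: "M \<subseteq>\<^sub>m foldl (mm_item pr P r) M xs"
proof (induction xs arbitrary: M)
  case Nil then show ?case by simp
next
  case (Cons a xs)
  then show ?case using mm_item_le map_le_trans by fastforce
qed

lemma stage_le: "M \<subseteq>\<^sub>m mm_stage m pr P M r"
  unfolding mm_stage_def by (rule foldl_le)

definition st :: "nat \<Rightarrow> nat list \<Rightarrow> profile \<Rightarrow> nat \<Rightarrow> matching" where
  "st m pr P r = foldl (mm_stage m pr P) Map.empty [1..<r+1]"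

lemma st_0[simp]: "st m pr P 0 = Map.empty"
  by (simp add: st_def)

lemma st_Suc: "st m pr P (Suc r) = mm_stage m pr P (st m pr P r) (Suc r)"
  by (simp add: st_def)

lemma MaxMatch_st: "MaxMatch m pr P = st m pr P m"
  by (simp add: st_def MaxMatch_def)

lemma st_mono: "r \<le> r' \<Longrightarrow> st m pr P r \<subseteq>\<^sub>m st m pr P r'"
proof (induction r' rule: dec_induct)
  case base then show ?case by simp
next
  case (step k)
  then show ?case using stage_le[of "st m pr P k" m pr P "Suc k"] map_le_trans
    by (fastforce simp: st_Suc)
qed

lemma map_le_ran: "A \<subseteq>\<^sub>m B \<Longrightarrow> ran A \<subseteq> ran B"
  by (force simp: map_le_def ran_def dom_def)

lemma map_le_SomeD: "A \<subseteq>\<^sub>m B \<Longrightarrow> A x = Some y \<Longrightarrow> B x = Some y"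
  by (force simp: map_le_def dom_def)

lemma map_le_NoneD: "A \<subseteq>\<^sub>m B \<Longrightarrow> B x = None \<Longrightarrow> A x = None"
  by (force simp: map_le_def dom_def)

definition inv_m :: "nat \<Rightarrow> nat \<Rightarrow> matching \<Rightarrow> bool" where
  "inv_m n m M \<longleftrightarrow> (\<forall>j. M j \<noteq> None \<longrightarrow> j < n) \<and> (\<forall>j a. M j = Some a \<longrightarrow> a < m)
     \<and> (\<forall>j j' a. M j = Some a \<longrightarrow> M j' = Some a \<longrightarrow> j = j')"

lemma inv_m_item:
  assumes "inv_m n m M" "i < m" "set pr \<subseteq> {0..<n}"
  shows "inv_m n m (mm_item pr P r M i)"
proof (cases "i \<in> ran M")
  case True then show ?thesis using assms by (simp add: mm_item_def)
next
  case False
  show ?thesis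
  proof (cases "find (\<lambda>j. M j = None \<and> i \<in> set (take r (P j))) pr")
    case None then show ?thesis using assms False by (simp add: mm_item_def)
  next
    case (Some j)
    from find_SomeD[OF Some] have j: "j \<in> set pr" "M j = None" by auto
    have "mm_item pr P r M i = M(j \<mapsto> i)" using False Some by (simp add: mm_item_def)
    have iM: "\<forall>j'. M j' \<noteq> Some i" using False by (auto simp: ran_def)
    have jn: "j < n" using j assms(3) by auto
    show ?thesis unfolding inv_m_def
    proof (intro conjI allI impI)
      fix x assume "mm_item pr P r M i x \<noteq> None"
      then show "x < n" using assms(1) jn unfolding \<open>mm_item pr P r M i = M(j \<mapsto> i)\<close> inv_m_def
        by (cases "x = j") auto
    next
      fix x a assume "mm_item pr P r M i x = Some a"
      then show "a < m" using assms(1,2) unfolding \<open>mm_item pr P r M i = M(j \<mapsto> i)\<close> inv_m_def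
        by (cases "x = j") auto
    next
      fix x y a assume "mm_item pr P r M i x = Some a" "mm_item pr P r M i y = Some a"
      then show "x = y" using assms(1) iM unfolding \<open>mm_item pr P r M i = M(j \<mapsto> i)\<close> inv_m_def
        by (cases "x = j"; cases "y = j") auto
    qed
  qed
qed

lemma inv_m_foldl:
  assumes "inv_m n m M" "set xs \<subseteq> {0..<m}" "set pr \<subseteq> {0..<n}"
  shows "inv_m n m (foldl (mm_item pr P r) M xs)"
  using assms
proof (induction xs arbitrary: M)
  case Nil then show ?case by simp
next
  case (Cons a xs)
  then show ?case using inv_m_item[of n m M a pr P r] by simp
qed

lemma inv_m_st:
  assumes "set pr \<subseteq> {0..<n}"
  shows "inv_m n m (st m pr P r)"
proof (induction r)
  case 0 then show ?case by (simp add: inv_m_def)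
next
  case (Suc r)
  then show ?case using inv_m_foldl[of n m _ "[0..<m]" pr] assms
    by (simp add: st_Suc mm_stage_def)
qed

lemma inv_m_is_matching: "inv_m n m M \<Longrightarrow> is_matching n m M"
  unfolding inv_m_def is_matching_def inj_on_def dom_def by fastforce

definition inv_t :: "profile \<Rightarrow> nat \<Rightarrow> matching \<Rightarrow> bool" where
  "inv_t P r M \<longleftrightarrow> (\<forall>j a. M j = Some a \<longrightarrow> a \<in> set (take r (P j)))"

lemma inv_t_item:
  assumes "inv_t P r M"
  shows "inv_t P r (mm_item pr P r M i)"
  using assms unfolding mm_item_def inv_t_def
  by (auto split: option.splits dest!: find_SomeD)

lemma inv_t_foldl:
  assumes "inv_t P r M"
  shows "inv_t P r (foldl (mm_item pr P r) M xs)"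
  using assms
proof (induction xs arbitrary: M)
  case Nil then show ?case by simp
next
  case (Cons a xs)
  then show ?case using inv_t_item by simp
qed

lemma set_take_mono: "r \<le> r' \<Longrightarrow> set (take r xs) \<subseteq> set (take r' xs)"
  by (metis min.absorb1 set_take_subset take_take)

lemma inv_t_st: "inv_t P r (st m pr P r)"
proof (induction r)
  case 0 then show ?case by (simp add: inv_t_def)
next
  case (Suc r)
  have "inv_t P (Suc r) (st m pr P r)"
  proof -
    have "set (take r xs) \<subseteq> set (take (Suc r) xs)" for xs :: "nat list" by (rule set_take_mono) simp
    then show ?thesis using Suc unfolding inv_t_def by blast
  qed
  then show ?case using inv_t_foldl by (simp add: st_Suc mm_stage_def)
qed

lemma item_ran:
  assumes "j \<in> set pr" "M j = None" "i \<in> set (take r (P j))"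
  shows "i \<in> ran (mm_item pr P r M i)"
proof (cases "i \<in> ran M")
  case True then show ?thesis by (simp add: mm_item_def)
next
  case False
  have "find (\<lambda>j. M j = None \<and> i \<in> set (take r (P j))) pr \<noteq> None"
    using assms by (auto simp: find_None_iff)
  then obtain j' where "find (\<lambda>j. M j = None \<and> i \<in> set (take r (P j))) pr = Some j'" by auto
  then show ?thesis using False by (simp add: mm_item_def ran_def)
qed

lemma stage_max:
  assumes "j \<in> set pr" "mm_stage m pr P M r j = None" "i < m" "i \<in> set (take r (P j))"
  shows "i \<in> ran (mm_stage m pr P M r)"
proof -
  have sp: "[0..<m] = [0..<i] @ i # [Suc i..<m]"
  proof -
    have "[0..<m] = [0..<i] @ [i..<m]" using assms(3) upt_add_eq_append[of 0 i "m - i"] by simp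
    also have "[i..<m] = i # [Suc i..<m]" using assms(3) by (simp add: upt_conv_Cons)
    finally show ?thesis .
  qed
  define M1 where "M1 = foldl (mm_item pr P r) M [0..<i]"
  define M2 where "M2 = mm_item pr P r M1 i"
  have eq: "mm_stage m pr P M r = foldl (mm_item pr P r) M2 [Suc i..<m]"
    unfolding mm_stage_def M2_def M1_def by (subst sp) simp
  have le2: "M2 \<subseteq>\<^sub>m mm_stage m pr P M r" using eq foldl_le by metis
  have le1: "M1 \<subseteq>\<^sub>m M2" unfolding M2_def by (rule mm_item_le)
  have "M1 j = None" using assms(2) le1 le2 map_le_NoneD by metis
  then have "i \<in> ran M2" unfolding M2_def using item_ran assms by metis
  then show ?thesis using map_le_ran[OF le2] by blast
qed

lemma st_max:
  assumes "j \<in> set pr" "st m pr P r j = None" "i < m" "i \<in> set (take r (P j))"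
  shows "i \<in> ran (st m pr P r)"
proof (cases r)
  case 0 then show ?thesis using assms by simp
next
  case (Suc r')
  then show ?thesis using stage_max[of j pr m P "st m pr P r'" r i] assms by (simp add: st_Suc)
qed

lemma item_cong: "(\<And>x. take r (P x) = take r (Q x)) \<Longrightarrow> mm_item pr P r = mm_item pr Q r"
  by (intro ext) (simp add: mm_item_def)

lemma st_cong: "(\<And>x. take r (P x) = take r (Q x)) \<Longrightarrow> st m pr P r = st m pr Q r"
proof (induction r)
  case 0 then show ?case by simp
next
  case (Suc r)
  have h: "take r (P x) = take r (Q x)" for x
  proof -
    have "take r (P x) = take r (take (Suc r) (P x))" by simp
    also have "\<dots> = take r (take (Suc r) (Q x))" using Suc.prems[of x] by simp
    finally show ?thesis by simp
  qed
  have "mm_item pr P (Suc r) = mm_item pr Q (Suc r)" using item_cong Suc.prems by blast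
  then show ?case using Suc.IH h by (simp add: st_Suc mm_stage_def)
qed


lemma valid_pref_len: "valid_pref m p \<Longrightarrow> length p = m"
  using distinct_card[of p] by (simp add: valid_pref_def)

lemma pos_nth: "distinct p \<Longrightarrow> l < length p \<Longrightarrow> pos p (p ! l) = l"
  unfolding pos_def
  by (rule Least_equality) (auto simp: nth_eq_iff_index_eq)

lemma pos_in: "b \<in> set p \<Longrightarrow> pos p b < length p \<and> p ! pos p b = b"
  unfolding pos_def by (rule LeastI_ex) (auto simp: in_set_conv_nth)

lemma pos_le: "k < length p \<Longrightarrow> p ! k = b \<Longrightarrow> pos p b \<le> k"
  unfolding pos_def by (rule Least_le) simp

lemma in_take_pos: "x \<in> set (take r p) \<Longrightarrow> pos p x < r"
proof -
  assume "x \<in> set (take r p)"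
  then obtain l where "l < length (take r p)" "take r p ! l = x" by (auto simp: in_set_conv_nth)
  then have "l < r" "l < length p" "p ! l = x" by auto
  then show ?thesis using pos_le[of l p x] by simp
qed

lemma nth_notin_take: "distinct (p::nat list) \<Longrightarrow> k < length p \<Longrightarrow> p ! k \<notin> set (take k p)"
  using in_take_pos[of "p!k" k p] pos_nth[of p k] by auto

lemma valid_profile_pref: "valid_profile n m P \<Longrightarrow> j < n \<Longrightarrow> valid_pref m (P j)"
  unfolding valid_profile_def by auto

(* rank approximation *)
lemma rank_le_n: "rank n i M P \<le> n"
proof -
  have "{j. j < n \<and> (\<exists>a. M j = Some a \<and> a \<in> set (take i (P j)))} \<subseteq> {..<n}" by auto
  from card_mono[OF finite_lessThan this] show ?thesis unfolding rank_def by simp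
qed

lemma rank_main:
  assumes pr: "set pr = {0..<n}" and i: "i \<le> m" and M: "is_matching n m M"
  shows "rank n i M P \<le> 2 * rank n i (MaxMatch m pr P) P"
proof -
  define S where "S = st m pr P i"
  define out where "out = MaxMatch m pr P"
  have Sout: "S \<subseteq>\<^sub>m out" unfolding S_def out_def MaxMatch_st using st_mono i by blast
  have invS: "inv_m n m S" unfolding S_def using inv_m_st pr by simp
  have tS: "inv_t P i S" unfolding S_def by (rule inv_t_st)
  have domS: "dom S \<subseteq> {j. j < n \<and> (\<exists>a. out j = Some a \<and> a \<in> set (take i (P j)))}"
  proof
    fix j assume "j \<in> dom S"
    then obtain a where a: "S j = Some a" by auto
    then have "j < n" using invS unfolding inv_m_def by auto
    moreover have "out j = Some a" using a Sout map_le_SomeD by metis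
    moreover have "a \<in> set (take i (P j))" using tS a unfolding inv_t_def by auto
    ultimately show "j \<in> {j. j < n \<and> (\<exists>a. out j = Some a \<and> a \<in> set (take i (P j)))}" by auto
  qed
  have c1: "card (dom S) \<le> rank n i out P"
    unfolding rank_def by (rule card_mono[OF _ domS]) auto
  define A where "A = {j. j < n \<and> (\<exists>a. M j = Some a \<and> a \<in> set (take i (P j)))}"
  define B where "B = A - dom S"
  have finA: "finite A" unfolding A_def by auto
  have finS: "finite (dom S)"
    by (rule finite_subset[of _ "{..<n}"]) (use invS in \<open>auto simp: inv_m_def\<close>)
  have "card A \<le> card (dom S) + card B"
  proof -
    have "A \<subseteq> dom S \<union> B" unfolding B_def by auto
    then have "card A \<le> card (dom S \<union> B)" using finS finA B_def by (intro card_mono) auto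
    also have "\<dots> \<le> card (dom S) + card B" by (rule card_Un_le)
    finally show ?thesis .
  qed
  moreover have "card B \<le> card (dom S)"
  proof -
    have inj: "inj_on (\<lambda>j. the (M j)) B"
    proof (rule inj_onI)
      fix x y assume "x \<in> B" "y \<in> B" "the (M x) = the (M y)"
      then have "M x = M y" "x \<in> dom M" "y \<in> dom M" unfolding B_def A_def by auto
      then show "x = y" using M unfolding is_matching_def inj_on_def by blast
    qed
    have sub: "(\<lambda>j. the (M j)) ` B \<subseteq> ran S"
    proof
      fix y assume "y \<in> (\<lambda>j. the (M j)) ` B"
      then obtain j where jB: "j \<in> B" "y = the (M j)" by auto
      then obtain a where j: "j \<in> B" "y = a" "M j = Some a" "a \<in> set (take i (P j))" "j < n"
        unfolding B_def A_def by auto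
      have "a < m" using M j(3) unfolding is_matching_def by auto
      moreover have "S j = None" using j(1) unfolding B_def by auto
      moreover have "j \<in> set pr" using pr j by auto
      ultimately show "y \<in> ran S" using st_max j unfolding S_def by metis
    qed
    have "ran S = (\<lambda>x. the (S x)) ` dom S" unfolding ran_def dom_def by force
    then have "card (ran S) \<le> card (dom S)" by (metis card_image_le finS)
    moreover have "card B \<le> card (ran S)"
      using card_inj_on_le[OF inj sub] finS \<open>ran S = _\<close> by simp
    ultimately show ?thesis by simp
  qed
  ultimately have "card A \<le> 2 * card (dom S)" by simp
  then show ?thesis using c1 unfolding rank_def A_def out_def by simp
qed

lemma rank_approx_MM:
  assumes pr: "set pr = {0..<n}"
  shows "rank_approx n m 2 (\<lambda>P. return_pmf (MaxMatch m pr P))"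
  unfolding rank_approx_def
proof (intro conjI allI impI ballI)
  show "is_mechanism n m (\<lambda>P. return_pmf (MaxMatch m pr P))"
    unfolding is_mechanism_def MaxMatch_st using inv_m_st inv_m_is_matching pr by auto
next
  fix P i assume "valid_profile n m P" "i \<in> {1..m}"
  then have i: "i \<le> m" by auto
  define R where "R = {rank n i M P |M. is_matching n m M}"
  have fin: "finite R" unfolding R_def
    by (rule finite_subset[of _ "{..n}"]) (auto simp: rank_le_n)
  have ne: "R \<noteq> {}" unfolding R_def
    by (rule ccontr) (auto simp: is_matching_def)
  have "Max R \<le> 2 * rank n i (MaxMatch m pr P) P"
    using fin ne rank_main[OF pr i] unfolding R_def by (auto intro!: Max.boundedI)
  then have "real (maxrank n m i P) \<le> 2 * real (rank n i (MaxMatch m pr P) P)"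
    unfolding maxrank_def R_def[symmetric] by linarith
  then show "real (maxrank n m i P) / 2
      \<le> measure_pmf.expectation (return_pmf (MaxMatch m pr P)) (\<lambda>M. real (rank n i M P))"
    by simp
qed


(* pseudomonotonicity *)
lemma unmatched_top:
  assumes "st m pr P k ag = None" "ag \<in> set pr" "y \<in> set (take (Suc k) (P ag))"
    "y \<notin> ran (st m pr P k)" "k < length (P ag)" "valid_pref m (P ag)"
  shows "y = P ag ! k"
proof -
  have "y \<in> set (take k (P ag)) \<or> y = P ag ! k"
    using assms(3,5) by (auto simp: take_Suc_conv_app_nth)
  moreover have "y < m" using assms(3,6) unfolding valid_pref_def by (auto dest: in_set_takeD)
  ultimately show ?thesis using st_max[OF assms(2,1)] assms(4) by blast
qed

lemma pm_MM:
  assumes pr: "set pr = {0..<n}" and P: "valid_profile n m P" and j: "j < n"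
    and p': "valid_pref m p'"
    and nwb: "\<not> weakly_better (P j) (MaxMatch m pr P j) (MaxMatch m pr (P(j := p')) j)"
    and nb: "\<not> (\<exists>b<m. better (P j) (Some b) (MaxMatch m pr (P(j := p')) j) \<and> pos (P j) b < pos p' b)"
  shows False
proof -
  define p where "p = P j"
  define P' where "P' = P(j := p')"
  define out where "out = st m pr P m"
  define out' where "out' = st m pr P' m"
  have vp: "valid_pref m p" unfolding p_def using P j valid_profile_pref by blast
  have lp: "length p = m" "distinct p" "set p = {0..<m}" using vp valid_pref_len unfolding valid_pref_def by auto
  have lp': "length p' = m" "distinct p'" "set p' = {0..<m}" using p' valid_pref_len unfolding valid_pref_def by auto
  have P': "valid_profile n m P'" using P p' unfolding P'_def valid_profile_def by auto
  have prs: "set pr \<subseteq> {0..<n}" using pr by simp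
  have jpr: "j \<in> set pr" using pr j by simp
  have inj': "\<And>x y a. out' x = Some a \<Longrightarrow> out' y = Some a \<Longrightarrow> x = y"
    using inv_m_st[OF prs, of m P' m] unfolding out'_def inv_m_def by blast
  have nwb': "\<not> weakly_better p (out j) (out' j)" using nwb unfolding p_def P'_def out_def out'_def MaxMatch_st .
  have nb': "\<And>b. b < m \<Longrightarrow> better p (Some b) (out' j) \<Longrightarrow> pos p' b \<le> pos p b"
    using nb unfolding p_def P'_def out'_def MaxMatch_st by (auto simp: not_less)
  obtain c where c: "out' j = Some c"
    using nwb' by (cases "out' j"; cases "out j") (auto simp: weakly_better_def)
  have cm: "c < m" using inv_m_st[OF prs, of m P' m] c unfolding out'_def inv_m_def by blast
  define k where "k = pos p c"
  have km: "k < m" and pk: "p ! k = c" using pos_in[of c p] lp cm unfolding k_def by auto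
  have a_cases: "out j = None \<or> (\<exists>e. out j = Some e \<and> k \<le> pos p e)" and ac: "out j \<noteq> Some c"
    using nwb' c unfolding k_def by (cases "out j"; auto simp: weakly_better_def)+
  have agree: "\<And>l. l < k \<Longrightarrow> p' ! l = p ! l"
  proof -
    fix l show "l < k \<Longrightarrow> p' ! l = p ! l"
    proof (induction l rule: less_induct)
      case (less l)
      define b where "b = p ! l"
      have lm: "l < m" using less.prems km by simp
      have bm: "b < m" using lp lm unfolding b_def by (metis atLeastLessThan_iff nth_mem)
      have pb: "pos p b = l" unfolding b_def using pos_nth lp lm by simp
      have "better p (Some b) (out' j)" using c pb less.prems unfolding k_def by simp
      then have q: "pos p' b \<le> l" using nb'[OF bm] pb by simp
      have bin: "b \<in> set p'" using lp' bm by simp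
      have q2: "p' ! pos p' b = b" using pos_in[OF bin] by simp
      show ?case
      proof (cases "pos p' b < l")
        case True
        then have "p ! pos p' b = b" using less.IH[of "pos p' b"] q2 less.prems by simp
        then have "pos p' b = l" using lp lm True unfolding b_def by (simp add: nth_eq_iff_index_eq)
        then show ?thesis using True by simp
      next
        case False
        then have "pos p' b = l" using q by simp
        then show ?thesis using q2 b_def by simp
      qed
    qed
  qed
  have tk: "take k p' = take k p"
    by (rule nth_equalityI) (use lp lp' km agree in auto)
  have takeP: "\<And>x. take k (P' x) = take k (P x)"
    unfolding P'_def using tk p_def by simp
  define M0 where "M0 = st m pr P k"
  have M0': "st m pr P' k = M0" unfolding M0_def using st_cong takeP by metis
  have out_le: "st m pr P (Suc k) \<subseteq>\<^sub>m out" unfolding out_def using st_mono km by simp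
  have out'_le: "st m pr P' (Suc k) \<subseteq>\<^sub>m out'" unfolding out'_def using st_mono km by simp
  have M0le: "M0 \<subseteq>\<^sub>m st m pr P (Suc k)" unfolding M0_def using st_mono by simp
  have M0le': "M0 \<subseteq>\<^sub>m st m pr P' (Suc k)" unfolding M0'[symmetric] using st_mono by simp
  have M0out': "M0 \<subseteq>\<^sub>m out'" using M0le' out'_le map_le_trans by blast
  have jN: "st m pr P (Suc k) j = None"
  proof (rule ccontr)
    assume "st m pr P (Suc k) j \<noteq> None"
    then obtain x where x: "st m pr P (Suc k) j = Some x" by auto
    then have "x \<in> set (take (Suc k) p)" using inv_t_st[of P "Suc k" m pr] unfolding inv_t_def p_def by blast
    then have px: "pos p x < Suc k" by (rule in_take_pos)
    have ox: "out j = Some x" using x out_le map_le_SomeD by metis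
    then have "k \<le> pos p x" using a_cases by auto
    then have "pos p x = k" using px by simp
    moreover have "x \<in> set p" using \<open>x \<in> set (take (Suc k) p)\<close> in_set_takeD by metis
    ultimately have "x = c" using pos_in[of x p] pk by simp
    then show False using ox ac by simp
  qed
  have M0j: "M0 j = None" using jN M0le map_le_NoneD by metis
  have cin: "c \<in> set (take (Suc k) p)" using pk lp km by (auto simp: take_Suc_conv_app_nth)
  have "c \<in> ran (st m pr P (Suc k))" using st_max[OF jpr jN cm] cin unfolding p_def by simp
  then obtain ag where ag: "st m pr P (Suc k) ag = Some c" by (auto simp: ran_def)
  have oj: "ag \<noteq> j" using ag jN by auto
  have on: "ag < n" using inv_m_st[OF prs, of m P "Suc k"] ag unfolding inv_m_def by blast
  have cM0: "c \<notin> ran M0"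
  proof
    assume "c \<in> ran M0"
    then obtain ag2 where "M0 ag2 = Some c" by (auto simp: ran_def)
    then have "out' ag2 = Some c" "ag2 \<noteq> j" using M0out' map_le_SomeD M0j by (metis, metis option.distinct(1))
    then show False using inj' c by blast
  qed
  have M0o: "M0 ag = None"
  proof (rule ccontr)
    assume "M0 ag \<noteq> None"
    then obtain y where "M0 ag = Some y" by auto
    then have "st m pr P (Suc k) ag = Some y" using M0le map_le_SomeD by metis
    then show False using ag cM0 \<open>M0 ag = Some y\<close> by (auto simp: ran_def)
  qed
  have vo: "valid_pref m (P ag)" using P on valid_profile_pref by blast
  have lo: "length (P ag) = m" using vo valid_pref_len by blast
  have copo: "c \<in> set (take (Suc k) (P ag))" using inv_t_st[of P "Suc k" m pr] ag unfolding inv_t_def by blast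
  have opr: "ag \<in> set pr" using on pr by simp
  have c_eq: "c = P ag ! k"
    using unmatched_top[of m pr P k ag c] M0o opr copo cM0 km lo vo unfolding M0_def by simp
  show False
  proof (cases "c \<in> ran (st m pr P' (Suc k))")
    case True
    then obtain ag' where ag': "st m pr P' (Suc k) ag' = Some c" by (auto simp: ran_def)
    show False
    proof (cases "ag' = j")
      case False
      then show False using ag' out'_le map_le_SomeD inj' c by metis
    next
      case True
      have "P' j = p'" by (simp add: P'_def)
      then have "c \<in> set (take (Suc k) p')"
        using inv_t_st[of P' "Suc k" m pr] ag' True unfolding inv_t_def by metis
      moreover have "c \<notin> set (take k p')" using tk nth_notin_take[of p k] lp km pk by simp
      ultimately have "c = p' ! k" using lp' km by (auto simp: take_Suc_conv_app_nth)
      then have "take (Suc k) p' = take (Suc k) p"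
        using tk lp lp' km pk by (simp add: take_Suc_conv_app_nth)
      then have "\<And>x. take (Suc k) (P' x) = take (Suc k) (P x)" unfolding P'_def p_def by simp
      then have "st m pr P' (Suc k) = st m pr P (Suc k)" using st_cong by metis
      then show False using ag' True jN by simp
    qed
  next
    case False
    have Po: "P' ag = P ag" unfolding P'_def using oj by simp
    show False
    proof (cases "st m pr P' (Suc k) ag")
      case None
      then show False using st_max[OF opr None cm] copo Po False by simp
    next
      case (Some x)
      have xc: "x \<noteq> c" using Some False by (auto simp: ran_def)
      have xin: "x \<in> set (take (Suc k) (P ag))"
        using inv_t_st[of P' "Suc k" m pr] Some Po unfolding inv_t_def by metis
      have xM0: "x \<notin> ran M0"
      proof
        assume "x \<in> ran M0"
        then obtain ag2 where ag2: "M0 ag2 = Some x" by (auto simp: ran_def)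
        then have "st m pr P' (Suc k) ag2 = Some x" using M0le' map_le_SomeD by metis
        then have "ag2 = ag" using Some inv_m_st[OF prs, of m P' "Suc k"] unfolding inv_m_def by blast
        then show False using ag2 M0o by simp
      qed
      have "x = P ag ! k"
        using unmatched_top[of m pr P k ag x] M0o opr xin xM0 km lo vo unfolding M0_def by simp
      then show False using xc c_eq by simp
    qed
  qed
qed

lemma pseudomonotone_MM:
  assumes pr: "set pr = {0..<n}"
  shows "pseudomonotone n m (MaxMatch m pr)"
  unfolding pseudomonotone_def Let_def
  using pm_MM[OF pr] by blast


(* implementation *)
definition Sset :: "nat \<Rightarrow> nat \<Rightarrow> (nat \<times> nat \<times> nat) set" where
  "Sset n m = {(j, t, s). j < n \<and> t \<le> s \<and> s < m}"

definition Tset :: "nat \<Rightarrow> nat \<Rightarrow> nat \<Rightarrow> (nat + nat \<times> nat \<times> nat) set" where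
  "Tset n m K = Inl ` {..<K} \<union> Inr ` Sset n m"

definition hmap :: "(profile \<Rightarrow> matching) \<Rightarrow> profile \<Rightarrow> (nat + nat \<times> nat \<times> nat) \<Rightarrow> matching" where
  "hmap f P x = (case x of Inl _ \<Rightarrow> f P | Inr (j', t, s) \<Rightarrow> [j' \<mapsto> P j' ! t])"

definition Mch :: "nat \<Rightarrow> nat \<Rightarrow> nat \<Rightarrow> (profile \<Rightarrow> matching) \<Rightarrow> profile \<Rightarrow> matching pmf" where
  "Mch n m K f P = map_pmf (hmap f P) (pmf_of_set (Tset n m K))"

lemma finite_Sset: "finite (Sset n m)"
  by (rule finite_subset[of _ "{..<n} \<times> {..<m} \<times> {..<m}"]) (auto simp: Sset_def)

lemma finite_Tset: "finite (Tset n m K)"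
  unfolding Tset_def using finite_Sset by auto

lemma card_Tset: "card (Tset n m K) = K + card (Sset n m)"
  unfolding Tset_def
  by (subst card_Un_disjoint) (auto simp: finite_Sset card_image inj_on_def)

lemma Tset_ne: "K > 0 \<Longrightarrow> Tset n m K \<noteq> {}"
  unfolding Tset_def by auto

lemma prob_Mch:
  assumes "K > 0"
  shows "measure_pmf.prob (Mch n m K f P) A
     = real (card (Tset n m K \<inter> hmap f P -` A)) / real (K + card (Sset n m))"
  unfolding Mch_def measure_map_pmf
  using measure_pmf_of_set[OF Tset_ne[OF assms] finite_Tset] card_Tset
  by (metis Int_commute)

lemma Mch_matching:
  assumes "K > 0" "valid_profile n m P" "is_matching n m (f P)"
  shows "set_pmf (Mch n m K f P) \<subseteq> {M. is_matching n m M}"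
proof
  fix M assume "M \<in> set_pmf (Mch n m K f P)"
  then obtain x where x: "x \<in> Tset n m K" "M = hmap f P x"
    unfolding Mch_def using set_pmf_of_set[OF Tset_ne[OF assms(1)] finite_Tset] by auto
  show "M \<in> {M. is_matching n m M}"
  proof (cases x)
    case (Inl a)
    then show ?thesis using x assms(3) by (simp add: hmap_def)
  next
    case (Inr y)
    then obtain j t s where y: "y = (j, t, s)" by (cases y) auto
    then have jts: "j < n" "t < m" using x Inr by (auto simp: Tset_def Sset_def)
    then have "valid_pref m (P j)" using assms(2) valid_profile_pref by blast
    then have "P j ! t < m" using jts valid_pref_len unfolding valid_pref_def
      by (metis atLeastLessThan_iff nth_mem)
    then show ?thesis using x Inr y jts by (auto simp: hmap_def is_matching_def)
  qed
qed

lemma Mch_prob_f: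
  assumes "K > 0"
  shows "measure_pmf.prob (Mch n m K f P) {f P} \<ge> real K / real (K + card (Sset n m))"
proof -
  have "Inl ` {..<K} \<subseteq> Tset n m K \<inter> hmap f P -` {f P}"
    by (auto simp: Tset_def hmap_def)
  then have "card (Inl ` {..<K} :: (nat + nat \<times> nat \<times> nat) set) \<le> card (Tset n m K \<inter> hmap f P -` {f P})"
    using finite_Tset by (intro card_mono) auto
  then have "K \<le> card (Tset n m K \<inter> hmap f P -` {f P})"
    by (simp add: card_image)
  then show ?thesis unfolding prob_Mch[OF assms]
    by (intro divide_right_mono) auto
qed


lemma Mch_dist:
  assumes K: "K > 0" and P: "valid_profile n m P" and j: "j < n" and b: "b \<in> set (P j)"
  shows "item_dist (Mch n m K f P) j (Some b)
    = real (K * (if f P j = Some b then 1 else 0) + (m - pos (P j) b)) / real (K + card (Sset n m))"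
proof -
  have vp: "valid_pref m (P j)" using P j valid_profile_pref by blast
  have lp: "length (P j) = m" "distinct (P j)" using vp valid_pref_len unfolding valid_pref_def by auto
  define q where "q = pos (P j) b"
  have q: "q < m" "P j ! q = b" using pos_in[OF b] lp unfolding q_def by auto
  have nthq: "\<And>t. t < m \<Longrightarrow> P j ! t = b \<longleftrightarrow> t = q"
    using q lp by (metis nth_eq_iff_index_eq)
  define A :: "(nat + nat \<times> nat \<times> nat) set" where "A = (if f P j = Some b then Inl ` {..<K} else {})"
  define B :: "(nat + nat \<times> nat \<times> nat) set" where "B = Inr ` ((\<lambda>s. (j, q, s)) ` {q..<m})"
  have eq: "Tset n m K \<inter> hmap f P -` {M. M j = Some b} = A \<union> B"
  proof (rule set_eqI)
    fix x :: "nat + nat \<times> nat \<times> nat"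
    show "x \<in> Tset n m K \<inter> hmap f P -` {M. M j = Some b} \<longleftrightarrow> x \<in> A \<union> B"
    proof (cases x)
      case (Inl a)
      then show ?thesis by (auto simp: Tset_def hmap_def A_def B_def)
    next
      case (Inr y)
      obtain j' t s where y: "y = (j', t, s)" by (cases y) auto
      show ?thesis
      proof
        assume "x \<in> Tset n m K \<inter> hmap f P -` {M. M j = Some b}"
        then have h: "j' < n" "t \<le> s" "s < m" "[j' \<mapsto> P j' ! t] j = Some b"
          using Inr y by (auto simp: Tset_def Sset_def hmap_def)
        then have "j' = j" by (cases "j' = j") auto
        then have "t = q" using h nthq by auto
        then show "x \<in> A \<union> B" using Inr y h \<open>j' = j\<close> by (auto simp: B_def)
      next
        assume "x \<in> A \<union> B"
        then have "j' = j" "t = q" "q \<le> s" "s < m" using Inr y by (auto simp: A_def B_def split: if_splits)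
        then show "x \<in> Tset n m K \<inter> hmap f P -` {M. M j = Some b}"
          using Inr y j q by (auto simp: Tset_def Sset_def hmap_def)
      qed
    qed
  qed
  have cA: "card A = K * (if f P j = Some b then 1 else 0)"
    unfolding A_def by (auto simp: card_image)
  have cB: "card B = m - q"
    unfolding B_def by (simp add: card_image inj_on_def)
  have "card (A \<union> B) = card A + card B"
    by (rule card_Un_disjoint) (auto simp: A_def B_def)
  then show ?thesis unfolding item_dist_def prob_Mch[OF K] eq using cA cB q_def by simp
qed


lemma lex_core:
  fixes p p' :: "nat list" and a a' :: "nat option" and K m :: nat
  assumes lp: "length p = m" "distinct p" "set p = {0..<m}"
    and lp': "length p' = m" "distinct p'" "set p' = {0..<m}"
    and ne: "p \<noteq> p'" and Km: "K > m"
    and am: "\<And>e. a = Some e \<Longrightarrow> e < m" and am': "\<And>e. a' = Some e \<Longrightarrow> e < m"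
    and pm: "weakly_better p a a' \<or> (\<exists>b<m. better p (Some b) a' \<and> pos p b < pos p' b)"
  defines "cnt \<equiv> \<lambda>x. K * (if a = Some x then 1 else 0) + (m - pos p x)"
    and "cnt' \<equiv> \<lambda>x. K * (if a' = Some x then 1 else 0) + (m - pos p' x)"
  shows "\<exists>idx<m. (\<forall>l<idx. cnt (p ! l) = cnt' (p ! l)) \<and> cnt (p ! idx) > cnt' (p ! idx)"
proof -
  have ex: "\<exists>t. t < m \<and> p ! t \<noteq> p' ! t"
  proof (rule ccontr)
    assume "\<not> ?thesis"
    then have "p = p'" using lp lp' by (intro nth_equalityI) auto
    then show False using ne by simp
  qed
  define t0 where "t0 = (LEAST t. t < m \<and> p ! t \<noteq> p' ! t)"
  have t0: "t0 < m" "p ! t0 \<noteq> p' ! t0" using LeastI_ex[OF ex] unfolding t0_def by auto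
  have below: "\<And>l. l < t0 \<Longrightarrow> p ! l = p' ! l"
  proof -
    fix l assume l: "l < t0"
    then have "\<not> (l < m \<and> p ! l \<noteq> p' ! l)" unfolding t0_def by (rule not_less_Least)
    then show "p ! l = p' ! l" using l t0 by auto
  qed
  have P1: "\<And>l. l < t0 \<Longrightarrow> pos p' (p ! l) = l"
  proof -
    fix l assume l: "l < t0"
    then show "pos p' (p ! l) = l" using below[OF l] pos_nth[of p' l] lp' t0 by auto
  qed
  have P2: "\<And>l. l < m \<Longrightarrow> pos p (p ! l) = l" using pos_nth lp by metis
  have P3: "t0 < pos p' (p ! t0) \<and> pos p' (p ! t0) < m"
  proof -
    define x0 where "x0 = p ! t0"
    have x0in: "x0 \<in> set p'" using lp lp' t0 unfolding x0_def by (metis nth_mem)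
    define q where "q = pos p' x0"
    have q: "q < m" "p' ! q = x0" using pos_in[OF x0in] lp' unfolding q_def by auto
    have "q \<noteq> t0" using q t0 unfolding x0_def by auto
    moreover have "\<not> q < t0"
    proof
      assume "q < t0"
      then have "p ! q = p ! t0" using below q unfolding x0_def by metis
      then have "q = t0" using lp t0 \<open>q < t0\<close> by (metis nth_eq_iff_index_eq order.strict_trans)
      then show False using \<open>q < t0\<close> by simp
    qed
    ultimately show ?thesis using q unfolding q_def x0_def by simp
  qed
  have P4: "\<And>b. b < m \<Longrightarrow> pos p b < pos p' b \<Longrightarrow> t0 \<le> pos p b"
  proof (rule ccontr)
    fix b assume b: "b < m" "pos p b < pos p' b" "\<not> t0 \<le> pos p b"
    have bin: "b \<in> set p" using b lp by simp
    have "p ! pos p b = b" using pos_in[OF bin] by simp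
    then have "pos p' b = pos p b" using P1[of "pos p b"] b by simp
    then show False using b by simp
  qed
  have eqbelow: "\<And>l. l < t0 \<Longrightarrow> (a = Some (p ! l)) = (a' = Some (p ! l)) \<Longrightarrow> cnt (p ! l) = cnt' (p ! l)"
    unfolding cnt_def cnt'_def using P1 P2 t0 by auto
  have strict0: "(a = Some (p ! t0)) = (a' = Some (p ! t0)) \<Longrightarrow> cnt (p ! t0) > cnt' (p ! t0)"
    unfolding cnt_def cnt'_def using P2[OF t0(1)] P3 by auto
  have base: "\<forall>l\<le>t0. (a = Some (p ! l)) = (a' = Some (p ! l)) \<Longrightarrow> ?thesis"
    using eqbelow strict0 t0 by (meson less_imp_le order.refl)
  show ?thesis
  proof (cases "a = a'")
    case True then show ?thesis using base by simp
  next
    case False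
    show ?thesis
    proof (cases "better p a a'")
      case True
      then obtain e where e: "a = Some e" by (cases a) auto
      have em: "e < m" using am e by simp
      define pe where "pe = pos p e"
      have pe: "pe < m" "p ! pe = e" using pos_in[of e p] lp em unfolding pe_def by auto
      have nc: "\<And>l. l \<le> pe \<Longrightarrow> a' \<noteq> Some (p ! l)"
      proof
        fix l assume l: "l \<le> pe" "a' = Some (p ! l)"
        then have "pos p (p ! l) = l" using P2 pe by simp
        moreover have "pe < pos p (p ! l)" using True e l unfolding pe_def by auto
        ultimately show False using l by simp
      qed
      have ne_e: "\<And>l. l < pe \<Longrightarrow> p ! l \<noteq> e"
      proof
        fix l assume "l < pe" "p ! l = e"
        then show False using P2[of l] pe unfolding pe_def by auto
      qed
      show ?thesis
      proof (cases "t0 < pe")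
        case True
        have "\<forall>l\<le>t0. (a = Some (p ! l)) = (a' = Some (p ! l))"
        proof (intro allI impI)
          fix l assume "l \<le> t0"
          then have "l < pe" using True by simp
          then show "(a = Some (p ! l)) = (a' = Some (p ! l))" using nc[of l] ne_e[of l] e by auto
        qed
        then show ?thesis using base by simp
      next
        case False
        have eq: "\<forall>l<pe. cnt (p ! l) = cnt' (p ! l)"
        proof (intro allI impI)
          fix l assume l: "l < pe"
          then have "l < t0" using False by simp
          moreover have "(a = Some (p ! l)) = (a' = Some (p ! l))" using nc[of l] ne_e[OF l] e l by auto
          ultimately show "cnt (p ! l) = cnt' (p ! l)" using eqbelow by blast
        qed
        have "cnt (p ! pe) \<ge> K" unfolding cnt_def using pe e by simp
        moreover have "cnt' (p ! pe) \<le> m" unfolding cnt'_def using nc[of pe] by simp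
        ultimately show ?thesis using eq pe Km by (intro exI[of _ pe]) auto
      qed
    next
      case nb: False
      then have nwb: "\<not> weakly_better p a a'" using False by (simp add: weakly_better_def)
      then obtain b where b: "b < m" "better p (Some b) a'" "pos p b < pos p' b" using pm by blast
      obtain c where c: "a' = Some c"
        using nwb by (cases a'; cases a) (auto simp: weakly_better_def)
      have bc: "pos p b < pos p c" using b c by simp
      have tb: "t0 \<le> pos p b" using P4 b by simp
      have ca: "\<And>l. l \<le> t0 \<Longrightarrow> a' \<noteq> Some (p ! l)"
      proof
        fix l assume l: "l \<le> t0" "a' = Some (p ! l)"
        then have "pos p (p ! l) = l" using P2 t0 by simp
        then show False using l c bc tb by auto
      qed
      have ea: "\<And>l. l \<le> t0 \<Longrightarrow> a \<noteq> Some (p ! l)"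
      proof
        fix l assume l: "l \<le> t0" "a = Some (p ! l)"
        then have "\<not> better p (Some (p ! l)) (Some c)" using nb c by simp
        then have "pos p c \<le> pos p (p ! l)" by simp
        moreover have "pos p (p ! l) = l" using P2 l t0 by simp
        ultimately show False using l bc tb by simp
      qed
      show ?thesis using base ca ea by blast
    qed
  qed
qed


lemma Mch_lex:
  assumes Km: "K > m" and pm: "pseudomonotone n m f"
    and mt: "\<And>P. valid_profile n m P \<Longrightarrow> is_matching n m (f P)"
  shows "lex_truthful n m (Mch n m K f)"
  unfolding lex_truthful_def
proof (intro allI impI)
  fix P j p' assume P: "valid_profile n m P" and j: "j < n" and vp': "valid_pref m p'"
  define p where "p = P j"
  define P' where "P' = P(j := p')"
  have K: "K > 0" using Km by simp
  have vp: "valid_pref m p" unfolding p_def using P j valid_profile_pref by blast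
  have lp: "length p = m" "distinct p" "set p = {0..<m}" using vp valid_pref_len unfolding valid_pref_def by auto
  have lp': "length p' = m" "distinct p'" "set p' = {0..<m}" using vp' valid_pref_len unfolding valid_pref_def by auto
  have P': "valid_profile n m P'" using P vp' unfolding P'_def valid_profile_def by auto
  have P'j: "P' j = p'" unfolding P'_def by simp
  show "item_dist (Mch n m K f P) j = item_dist (Mch n m K f (P(j := p'))) j \<or>
        lex_dominates (P j) (item_dist (Mch n m K f P) j) (item_dist (Mch n m K f (P(j := p'))) j)"
  proof (cases "p = p'")
    case True
    then have "P(j := p') = P" unfolding p_def by (metis fun_upd_triv)
    then show ?thesis by simp
  next
    case False
    define a where "a = f P j"
    define a' where "a' = f P' j"
    have am: "\<And>e. a = Some e \<Longrightarrow> e < m" using mt[OF P] unfolding a_def is_matching_def by blast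
    have am': "\<And>e. a' = Some e \<Longrightarrow> e < m" using mt[OF P'] unfolding a'_def is_matching_def by blast
    have pmj: "weakly_better p a a' \<or> (\<exists>b<m. better p (Some b) a' \<and> pos p b < pos p' b)"
      using pm P j vp' unfolding pseudomonotone_def Let_def a_def a'_def P'_def p_def by blast
    obtain idx where idx: "idx < m"
      "\<forall>l<idx. K * (if a = Some (p!l) then 1 else 0) + (m - pos p (p!l))
             = K * (if a' = Some (p!l) then 1 else 0) + (m - pos p' (p!l))"
      "K * (if a = Some (p!idx) then 1 else 0) + (m - pos p (p!idx))
        > K * (if a' = Some (p!idx) then 1 else 0) + (m - pos p' (p!idx))"
      using lex_core[OF lp lp' False Km am am' pmj] by blast
    define D where "D = real (K + card (Sset n m))"
    have D: "D > 0" unfolding D_def using K by simp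
    have d: "\<And>l. l < m \<Longrightarrow> item_dist (Mch n m K f P) j (Some (p!l))
       = real (K * (if a = Some (p!l) then 1 else 0) + (m - pos p (p!l))) / D"
      unfolding D_def a_def p_def using Mch_dist[OF K P j] lp unfolding p_def by (metis nth_mem)
    have d': "\<And>l. l < m \<Longrightarrow> item_dist (Mch n m K f P') j (Some (p!l))
       = real (K * (if a' = Some (p!l) then 1 else 0) + (m - pos p' (p!l))) / D"
    proof -
      fix l assume l: "l < m"
      have "p ! l \<in> set (P' j)" using P'j lp lp' l by (metis nth_mem)
      then show "item_dist (Mch n m K f P') j (Some (p!l))
       = real (K * (if a' = Some (p!l) then 1 else 0) + (m - pos p' (p!l))) / D"
        unfolding D_def a'_def using Mch_dist[OF K P' j] P'j by simp
    qed
    have Ln: "\<And>l. l < m \<Longrightarrow> (map Some p @ [None]) ! l = Some (p ! l)"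
      using lp by (simp add: nth_append)
    have "lex_dominates p (item_dist (Mch n m K f P) j) (item_dist (Mch n m K f P') j)"
      unfolding lex_dominates_def Let_def
    proof (intro exI[of _ idx] conjI allI impI)
      show "idx < length (map Some p @ [None])" using idx lp by simp
    next
      fix l assume li: "l < idx"
      then have lm: "l < m" using idx(1) by simp
      have e: "K * (if a = Some (p!l) then 1 else 0) + (m - pos p (p!l))
             = K * (if a' = Some (p!l) then 1 else 0) + (m - pos p' (p!l))" using idx(2) li by blast
      have "item_dist (Mch n m K f P) j (Some (p!l)) = item_dist (Mch n m K f P') j (Some (p!l))"
        by (simp only: d[OF lm] d'[OF lm] e)
      then show "item_dist (Mch n m K f P) j ((map Some p @ [None]) ! l) =
                 item_dist (Mch n m K f P') j ((map Some p @ [None]) ! l)"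
        by (simp only: Ln[OF lm])
    next
      have "real (K * (if a' = Some (p!idx) then 1 else 0) + (m - pos p' (p!idx))) / D
          < real (K * (if a = Some (p!idx) then 1 else 0) + (m - pos p (p!idx))) / D"
        using idx(3) D by (intro divide_strict_right_mono) (simp only: of_nat_less_iff)+
      then show "item_dist (Mch n m K f P') j ((map Some p @ [None]) ! idx)
          < item_dist (Mch n m K f P) j ((map Some p @ [None]) ! idx)"
        by (simp only: Ln[OF idx(1)] d[OF idx(1)] d'[OF idx(1)])
    qed
    then show ?thesis unfolding p_def P'_def by simp
  qed
qed

lemma flt:
  assumes pm: "pseudomonotone n m f"
    and mt: "\<And>P. valid_profile n m P \<Longrightarrow> is_matching n m (f P)"
  shows "fully_lex_truthfully_implementable n m f"
  unfolding fully_lex_truthfully_implementable_def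
proof (intro allI impI)
  fix \<epsilon> :: real assume e: "\<epsilon> > 0"
  define N where "N = card (Sset n m)"
  define K where "K = nat \<lceil>real N / \<epsilon>\<rceil> + m + 1"
  have Km: "K > m" unfolding K_def by simp
  have K0: "K > 0" using Km by simp
  have KN: "real N \<le> \<epsilon> * real K"
  proof -
    have "real N / \<epsilon> \<le> real K" unfolding K_def by linarith
    then show ?thesis using e by (simp add: field_simps)
  qed
  show "\<exists>Mech. is_mechanism n m Mech \<and> lex_truthful n m Mech \<and>
          (\<forall>P. valid_profile n m P \<longrightarrow> 1 - \<epsilon> \<le> measure_pmf.prob (Mech P) {f P})"
  proof (intro exI[of _ "Mch n m K f"] conjI allI impI)
    show "is_mechanism n m (Mch n m K f)"
      unfolding is_mechanism_def using Mch_matching[OF K0] mt by blast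
    show "lex_truthful n m (Mch n m K f)" by (rule Mch_lex[OF Km pm mt])
  next
    fix P assume "valid_profile n m P"
    have "1 - \<epsilon> \<le> real K / real (K + N)"
    proof -
      have pos: "real (K + N) > 0" using K0 by simp
      have "(1 - \<epsilon>) * real (K + N) \<le> real K"
      proof -
        have "(1 - \<epsilon>) * real (K + N) = real K + real N - \<epsilon> * real K - \<epsilon> * real N"
          by (simp add: algebra_simps)
        also have "\<dots> \<le> real K"
        proof -
          have "\<epsilon> * real N \<ge> 0" using e by simp
          then show ?thesis using KN by linarith
        qed
        finally show ?thesis .
      qed
      then show ?thesis using pos by (simp add: field_simps)
    qed
    also have "\<dots> \<le> measure_pmf.prob (Mch n m K f P) {f P}"
      using Mch_prob_f[OF K0] unfolding N_def by simp
    finally show "1 - \<epsilon> \<le> measure_pmf.prob (Mch n m K f P) {f P}" .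
  qed
qed

theorem theorem6:
  fixes n m :: nat and pr :: "nat list"
  assumes "distinct pr" and "set pr = {0..<n}"
  shows "pseudomonotone n m (MaxMatch m pr)
         \<and> rank_approx n m 2 (\<lambda>P. return_pmf (MaxMatch m pr P))
         \<and> fully_lex_truthfully_implementable n m (MaxMatch m pr)"
proof (intro conjI)
  show pm: "pseudomonotone n m (MaxMatch m pr)" by (rule pseudomonotone_MM[OF assms(2)])
  show "rank_approx n m 2 (\<lambda>P. return_pmf (MaxMatch m pr P))" by (rule rank_approx_MM[OF assms(2)])
  show "fully_lex_truthfully_implementable n m (MaxMatch m pr)"
  proof (rule flt[OF pm])
    fix P show "is_matching n m (MaxMatch m pr P)"
      unfolding MaxMatch_st using inv_m_st inv_m_is_matching assms(2) by simp
  qed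
qed

end
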